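(* (De Morgan laws.) (i) For every proposition $A$: $\vdash^H_{\mathbf{CPL*}}\Diamond\neg A\supset\neg\Box A$ and $\vdash^H_{\mathbf{CPL*}}\Box\neg A\supset\neg\Diamond A$. (ii) Neither $\Diamond\neg A\supset\neg\Box A$ nor $\Box\neg A\supset\neg\Diamond A$ is an axiom of CPL. (iii) For every converse well-founded $(W,\prec)$, context $\Gamma$, world $w$ and proposition $A$: if there is no $w'$ with $w\prec w'$ and $\Gamma\Rightarrow\bot[w']$, then $\Gamma\Rightarrow(\Diamond\neg A\supset\neg\Box A)[w]$ and $\Gamma\Rightarrow(\Box\neg A\supset\neg\Diamond A)[w]$. (iv) $\neg\Diamond A\supset\Box\neg A$ is an axiom of neither CPL nor CPL*. (v) $\neg\Box A\supset\Diamond\neg A$ is an axiom of neither CPL nor CPL*.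
   Context: A set $W$ of worlds with a binary accessibility relation $\prec$ is converse well-founded if there is no infinite chain $w_0\prec w_1\prec\cdots$; $\prec^*$ denotes its reflexive–transitive closure. Propositions: $A,B,C ::= Q\mid\bot\mid A\supset B\mid\Diamond A\mid\Box A$ ($Q$ atomic); $\neg A$ abbreviates $A\supset\bot$. A context $\Gamma$ is a finite collection of judgments $A[w]$. All judgments below are defined one world at a time (provability at $w$ after provability at all worlds reachable from $w$ by one or more $\prec$-steps), each as the least relation closed under its rules. CPL natural deduction $\Gamma\vdash_{\mathbf{CPL}}A[w]$: (hyp) $\Gamma,A[w]\vdash A[w]$; ($\bot E$) $\Gamma\vdash\bot[w]$ implies $\Gamma\vdash C[w]$; ($\supset I$) $\Gamma,A[w]\vdash B[w]$ implies $\Gamma\vdash A\supset B[w]$; ($\supset E$) $\Gamma\vdash A\supset B[w]$ and $\Gamma\vdash A[w]$ imply $\Gamma\vdash B[w]$; ($\Diamond I$) $w\prec w'$ and $\Gamma\vdash A[w']$ imply $\Gamma\vdash\Diamond A[w]$; ($\Box I$) if $\Gamma\vdash A[w']$ for all $w'$ with $w\prec w'$ then $\Gamma\vdash\Box A[w]$; ($\Diamond E$) if $\Gamma\vdash\Diamond A[w]$ and for all $w'$ with $w\prec w'$, $\Gamma\vdash A[w']$ implies $\Gamma\vdash C[w]$, then $\Gamma\vdash C[w]$; ($\Box E$) if $\Gamma\vdash\Box A[w]$ and ($\Gamma\vdash A[w']$ for all $w'$ with $w\prec w'$) implies $\Gamma\vdash C[w]$, then $\Gamma\vdash C[w]$.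 CPL* natural deduction $\Gamma\vdash_{\mathbf{CPL*}}A[w]$: identical except ($\bot E$) $w'\prec^* w$ and $\Gamma\vdash\bot[w]$ imply $\Gamma\vdash C[w']$; ($\Diamond E$) if $w''\prec^* w$, $\Gamma\vdash\Diamond A[w]$, and for all $w'$ with $w\prec w'$, $\Gamma\vdash A[w']$ implies $\Gamma\vdash C[w'']$, then $\Gamma\vdash C[w'']$; ($\Box E$) if $w''\prec^* w$, $\Gamma\vdash\Box A[w]$, and ($\Gamma\vdash A[w']$ for all $w'$ with $w\prec w'$) implies $\Gamma\vdash C[w'']$, then $\Gamma\vdash C[w'']$. CPL sequent calculus $\Gamma\Rightarrow A[w]$: (init) $\Gamma,Q[w]\Rightarrow Q[w]$ for $Q$ atomic; ($\bot L$) $\bot[w]\in\Gamma$ implies $\Gamma\Rightarrow C[w]$; ($\supset R$) $\Gamma,A[w]\Rightarrow B[w]$ implies $\Gamma\Rightarrow A\supset B[w]$; ($\supset L$) $A\supset B[w]\in\Gamma$, $\Gamma\Rightarrow A[w]$ and $\Gamma,B[w]\Rightarrow C[w]$ imply $\Gamma\Rightarrow C[w]$; ($\Diamond R$) $w\prec w'$ and $\Gamma\Rightarrow A[w']$ imply $\Gamma\Rightarrow\Diamond A[w]$; ($\Box R$) if $\Gamma\Rightarrow A[w']$ for all $w'$ with $w\prec w'$ then $\Gamma\Rightarrow\Box A[w]$; ($\Diamond L$) if $\Diamond A[w]\in\Gamma$ and for all $w'$ with $w\prec w'$, $\Gamma\Rightarrow A[w']$ implies $\Gamma\Rightarrow C[w]$,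 then $\Gamma\Rightarrow C[w]$; ($\Box L$) if $\Box A[w]\in\Gamma$ and ($\Gamma\Rightarrow A[w']$ for all $w'$ with $w\prec w'$) implies $\Gamma\Rightarrow C[w]$, then $\Gamma\Rightarrow C[w]$. $\vdash^H_{\mathbf{CPL*}}A$ means: for every converse well-founded $(W,\prec)$, every $w\in W$ and every context $\Gamma$, $\Gamma\vdash_{\mathbf{CPL*}}A[w]$. A schema is "not an axiom" of CPL (resp. CPL* ) if there exist a converse well-founded $(W,\prec)$, a world $w$, a context $\Gamma$ and an instance $A$ of the schema with $\Gamma\nvdash_{\mathbf{CPL}}A[w]$ (resp. $\Gamma\nvdash_{\mathbf{CPL*}}A[w]$). *)

theory Defs
  imports Main
begin

datatype 'a fm = Atom 'a | Bot | Imp "'a fm" "'a fm" | Dia "'a fm" | Box "'a fm"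

definition Neg :: "'a fm \<Rightarrow> 'a fm" where
  "Neg A = Imp A Bot"

type_synonym ('a, 'w) ctx = "('a fm \<times> 'w) list"

definition cwf :: "('w \<Rightarrow> 'w \<Rightarrow> bool) \<Rightarrow> bool" where
  "cwf R \<longleftrightarrow> \<not> (\<exists>f :: nat \<Rightarrow> 'w. \<forall>i. R (f i) (f (Suc i)))"

text \<open>Each judgment is defined one world at a time.  The parameter Q is the
  (already defined) provability at worlds reachable from the current world w
  by one or more steps; the inductive predicate is provability at w itself.\<close>

inductive cpl_at :: "('w \<Rightarrow> 'w \<Rightarrow> bool) \<Rightarrow> (('a,'w) ctx \<Rightarrow> 'a fm \<Rightarrow> 'w \<Rightarrow> bool)
    \<Rightarrow> 'w \<Rightarrow> ('a,'w) ctx \<Rightarrow> 'a fm \<Rightarrow> bool"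
  for R Q w where
  hyp: "(A, w) \<in> set \<Gamma> \<Longrightarrow> cpl_at R Q w \<Gamma> A"
| botE: "cpl_at R Q w \<Gamma> Bot \<Longrightarrow> cpl_at R Q w \<Gamma> C"
| impI: "cpl_at R Q w ((A, w) # \<Gamma>) B \<Longrightarrow> cpl_at R Q w \<Gamma> (Imp A B)"
| impE: "cpl_at R Q w \<Gamma> (Imp A B) \<Longrightarrow> cpl_at R Q w \<Gamma> A \<Longrightarrow> cpl_at R Q w \<Gamma> B"
| diaI: "R w w' \<Longrightarrow> Q \<Gamma> A w' \<Longrightarrow> cpl_at R Q w \<Gamma> (Dia A)"
| boxI: "(\<forall>w'. R w w' \<longrightarrow> Q \<Gamma> A w') \<Longrightarrow> cpl_at R Q w \<Gamma> (Box A)"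
| diaE: "cpl_at R Q w \<Gamma> (Dia A) \<Longrightarrow>
         (\<forall>w'. R w w' \<longrightarrow> Q \<Gamma> A w' \<longrightarrow> cpl_at R Q w \<Gamma> C) \<Longrightarrow> cpl_at R Q w \<Gamma> C"
| boxE: "cpl_at R Q w \<Gamma> (Box A) \<Longrightarrow>
         ((\<forall>w'. R w w' \<longrightarrow> Q \<Gamma> A w') \<longrightarrow> cpl_at R Q w \<Gamma> C) \<Longrightarrow> cpl_at R Q w \<Gamma> C"

text \<open>CPL*: the current world w plays the role of w''; w'' \<prec>* v is split into
  v = w (rules "here") and w \<prec>+ v (rules "far").\<close>
inductive cpls_at :: "('w \<Rightarrow> 'w \<Rightarrow> bool) \<Rightarrow> (('a,'w) ctx \<Rightarrow> 'a fm \<Rightarrow> 'w \<Rightarrow> bool)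
    \<Rightarrow> 'w \<Rightarrow> ('a,'w) ctx \<Rightarrow> 'a fm \<Rightarrow> bool"
  for R Q w where
  hyp: "(A, w) \<in> set \<Gamma> \<Longrightarrow> cpls_at R Q w \<Gamma> A"
| botE_here: "cpls_at R Q w \<Gamma> Bot \<Longrightarrow> cpls_at R Q w \<Gamma> C"
| botE_far: "R\<^sup>+\<^sup>+ w v \<Longrightarrow> Q \<Gamma> Bot v \<Longrightarrow> cpls_at R Q w \<Gamma> C"
| impI: "cpls_at R Q w ((A, w) # \<Gamma>) B \<Longrightarrow> cpls_at R Q w \<Gamma> (Imp A B)"
| impE: "cpls_at R Q w \<Gamma> (Imp A B) \<Longrightarrow> cpls_at R Q w \<Gamma> A \<Longrightarrow> cpls_at R Q w \<Gamma> B"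
| diaI: "R w w' \<Longrightarrow> Q \<Gamma> A w' \<Longrightarrow> cpls_at R Q w \<Gamma> (Dia A)"
| boxI: "(\<forall>w'. R w w' \<longrightarrow> Q \<Gamma> A w') \<Longrightarrow> cpls_at R Q w \<Gamma> (Box A)"
| diaE_here: "cpls_at R Q w \<Gamma> (Dia A) \<Longrightarrow>
         (\<forall>w'. R w w' \<longrightarrow> Q \<Gamma> A w' \<longrightarrow> cpls_at R Q w \<Gamma> C) \<Longrightarrow> cpls_at R Q w \<Gamma> C"
| diaE_far: "R\<^sup>+\<^sup>+ w v \<Longrightarrow> Q \<Gamma> (Dia A) v \<Longrightarrow>
         (\<forall>w'. R v w' \<longrightarrow> Q \<Gamma> A w' \<longrightarrow> cpls_at R Q w \<Gamma> C) \<Longrightarrow> cpls_at R Q w \<Gamma> C"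
| boxE_here: "cpls_at R Q w \<Gamma> (Box A) \<Longrightarrow>
         ((\<forall>w'. R w w' \<longrightarrow> Q \<Gamma> A w') \<longrightarrow> cpls_at R Q w \<Gamma> C) \<Longrightarrow> cpls_at R Q w \<Gamma> C"
| boxE_far: "R\<^sup>+\<^sup>+ w v \<Longrightarrow> Q \<Gamma> (Box A) v \<Longrightarrow>
         ((\<forall>w'. R v w' \<longrightarrow> Q \<Gamma> A w') \<longrightarrow> cpls_at R Q w \<Gamma> C) \<Longrightarrow> cpls_at R Q w \<Gamma> C"

inductive seq_at :: "('w \<Rightarrow> 'w \<Rightarrow> bool) \<Rightarrow> (('a,'w) ctx \<Rightarrow> 'a fm \<Rightarrow> 'w \<Rightarrow> bool)
    \<Rightarrow> 'w \<Rightarrow> ('a,'w) ctx \<Rightarrow> 'a fm \<Rightarrow> bool"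
  for R Q w where
  init: "(Atom q, w) \<in> set \<Gamma> \<Longrightarrow> seq_at R Q w \<Gamma> (Atom q)"
| botL: "(Bot, w) \<in> set \<Gamma> \<Longrightarrow> seq_at R Q w \<Gamma> C"
| impR: "seq_at R Q w ((A, w) # \<Gamma>) B \<Longrightarrow> seq_at R Q w \<Gamma> (Imp A B)"
| impL: "(Imp A B, w) \<in> set \<Gamma> \<Longrightarrow> seq_at R Q w \<Gamma> A \<Longrightarrow>
         seq_at R Q w ((B, w) # \<Gamma>) C \<Longrightarrow> seq_at R Q w \<Gamma> C"
| diaR: "R w w' \<Longrightarrow> Q \<Gamma> A w' \<Longrightarrow> seq_at R Q w \<Gamma> (Dia A)"
| boxR: "(\<forall>w'. R w w' \<longrightarrow> Q \<Gamma> A w') \<Longrightarrow> seq_at R Q w \<Gamma> (Box A)"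
| diaL: "(Dia A, w) \<in> set \<Gamma> \<Longrightarrow>
         (\<forall>w'. R w w' \<longrightarrow> Q \<Gamma> A w' \<longrightarrow> seq_at R Q w \<Gamma> C) \<Longrightarrow> seq_at R Q w \<Gamma> C"
| boxL: "(Box A, w) \<in> set \<Gamma> \<Longrightarrow>
         ((\<forall>w'. R w w' \<longrightarrow> Q \<Gamma> A w') \<longrightarrow> seq_at R Q w \<Gamma> C) \<Longrightarrow> seq_at R Q w \<Gamma> C"

text \<open>Stratified definition by well-founded recursion along the converse of \<prec>+
  (well-founded whenever R is converse well-founded).\<close>

definition later :: "('w \<Rightarrow> 'w \<Rightarrow> bool) \<Rightarrow> ('w \<times> 'w) set" where
  "later R = {(v, w). R\<^sup>+\<^sup>+ w v}"

definition strat ::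
  "('w \<Rightarrow> 'w \<Rightarrow> bool) \<Rightarrow>
   (('w \<Rightarrow> 'w \<Rightarrow> bool) \<Rightarrow> (('a,'w) ctx \<Rightarrow> 'a fm \<Rightarrow> 'w \<Rightarrow> bool) \<Rightarrow> 'w \<Rightarrow> ('a,'w) ctx \<Rightarrow> 'a fm \<Rightarrow> bool)
   \<Rightarrow> ('a,'w) ctx \<Rightarrow> 'a fm \<Rightarrow> 'w \<Rightarrow> bool" where
  "strat R step \<Gamma> A w =
     wfrec (later R) (\<lambda>f w. step R (\<lambda>\<Gamma>' A' v. f v \<Gamma>' A') w) w \<Gamma> A"

definition CPL :: "('w \<Rightarrow> 'w \<Rightarrow> bool) \<Rightarrow> ('a,'w) ctx \<Rightarrow> 'a fm \<Rightarrow> 'w \<Rightarrow> bool" where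
  "CPL R = strat R cpl_at"

definition CPLs :: "('w \<Rightarrow> 'w \<Rightarrow> bool) \<Rightarrow> ('a,'w) ctx \<Rightarrow> 'a fm \<Rightarrow> 'w \<Rightarrow> bool" where
  "CPLs R = strat R cpls_at"

definition Seq :: "('w \<Rightarrow> 'w \<Rightarrow> bool) \<Rightarrow> ('a,'w) ctx \<Rightarrow> 'a fm \<Rightarrow> 'w \<Rightarrow> bool" where
  "Seq R = strat R seq_at"

end

theory Submission
  imports Defs
begin

lemma wf_later: assumes "cwf R" shows "wf (later R)"
proof -
  have "wf {(v,w). R w v}"
    unfolding wf_iff_no_infinite_down_chain using assms unfolding cwf_def by auto
  then have "wf ({(v,w). R w v}\<^sup>+)" by (rule wf_trancl)
  moreover have "{(v,w). R w v}\<^sup>+ = later R"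
  proof -
    have "\<And>a b. (a,b) \<in> {(v,w). R w v}\<^sup>+ \<longleftrightarrow> R\<^sup>+\<^sup>+ b a"
    proof
      fix a b assume "(a,b) \<in> {(v,w). R w v}\<^sup>+"
      then show "R\<^sup>+\<^sup>+ b a" by induction (auto intro: tranclp.intros tranclp_trans)
    next
      fix a b assume "R\<^sup>+\<^sup>+ b a"
      then show "(a,b) \<in> {(v,w). R w v}\<^sup>+" by induction (auto intro: trancl_into_trancl2)
    qed
    then show ?thesis unfolding later_def by auto
  qed
  ultimately show ?thesis by simp
qed

lemma cwf_irrefl: "cwf R \<Longrightarrow> \<not> R\<^sup>+\<^sup>+ x x"
proof
  assume "cwf R" "R\<^sup>+\<^sup>+ x x"
  then have "(x,x) \<in> later R" unfolding later_def by auto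
  with wf_not_refl[OF wf_later[OF \<open>cwf R\<close>]] show False by blast
qed

definition QQ where
  "QQ R step w = (\<lambda>\<Gamma>' A' v. if R\<^sup>+\<^sup>+ w v then strat R step \<Gamma>' A' v else undefined \<Gamma>' A')"

lemma strat_unfold: assumes "cwf R"
  shows "strat R step \<Gamma> A w = step R (QQ R step w) w \<Gamma> A"
proof -
  have "strat R step \<Gamma> A w = wfrec (later R) (\<lambda>f w. step R (\<lambda>\<Gamma>' A' v. f v \<Gamma>' A') w) w \<Gamma> A"
    by (simp add: strat_def)
  also have "\<dots> = step R (QQ R step w) w \<Gamma> A"
    apply (subst wfrec[OF wf_later[OF assms]])
    by (simp add: cut_def QQ_def later_def strat_def)
  finally show ?thesis .
qed

lemma QQ_far[simp]: "R\<^sup>+\<^sup>+ w v \<Longrightarrow> QQ R step w \<Gamma> A v = strat R step \<Gamma> A v"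
  by (simp add: QQ_def)
lemma QQ_succ[simp]: "R w v \<Longrightarrow> QQ R step w \<Gamma> A v = strat R step \<Gamma> A v"
  by (simp add: QQ_def tranclp.r_into_trancl)

definition agree :: "('w \<Rightarrow> 'w \<Rightarrow> bool) \<Rightarrow> 'w \<Rightarrow> ('a,'w) ctx \<Rightarrow> ('a,'w) ctx \<Rightarrow> bool" where
  "agree R v \<Gamma> \<Gamma>' \<longleftrightarrow> (\<forall>u X. R\<^sup>*\<^sup>* v u \<longrightarrow> ((X,u) \<in> set \<Gamma> \<longleftrightarrow> (X,u) \<in> set \<Gamma>'))"

definition resp :: "(('w \<Rightarrow> 'w \<Rightarrow> bool) \<Rightarrow> (('a,'w) ctx \<Rightarrow> 'a fm \<Rightarrow> 'w \<Rightarrow> bool)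
    \<Rightarrow> 'w \<Rightarrow> ('a,'w) ctx \<Rightarrow> 'a fm \<Rightarrow> bool) \<Rightarrow> bool" where
  "resp step \<longleftrightarrow> (\<forall>R Q Q' v \<Gamma> \<Gamma>' X.
     (\<forall>\<Gamma> \<Gamma>' X u. R\<^sup>+\<^sup>+ v u \<longrightarrow> agree R u \<Gamma> \<Gamma>' \<longrightarrow> (Q \<Gamma> X u \<longleftrightarrow> Q' \<Gamma>' X u)) \<longrightarrow>
     agree R v \<Gamma> \<Gamma>' \<longrightarrow> step R Q v \<Gamma> X \<longrightarrow> step R Q' v \<Gamma>' X)"

lemma agree_sym: "agree R v \<Gamma> \<Gamma>' \<Longrightarrow> agree R v \<Gamma>' \<Gamma>"
  unfolding agree_def by blast

lemma agree_cons: "agree R v \<Gamma> \<Gamma>' \<Longrightarrow> agree R v ((A,v)#\<Gamma>) ((A,v)#\<Gamma>')"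
  unfolding agree_def by auto

lemma agree_hyp: "agree R v \<Gamma> \<Gamma>' \<Longrightarrow> (A,v) \<in> set \<Gamma> \<Longrightarrow> (A,v) \<in> set \<Gamma>'"
  unfolding agree_def by auto

lemma agree_succ: "agree R v \<Gamma> \<Gamma>' \<Longrightarrow> R v u \<Longrightarrow> agree R u \<Gamma> \<Gamma>'"
  unfolding agree_def by (meson converse_rtranclp_into_rtranclp)

lemma agree_far: "agree R v \<Gamma> \<Gamma>' \<Longrightarrow> R\<^sup>+\<^sup>+ v u \<Longrightarrow> agree R u \<Gamma> \<Gamma>'"
  unfolding agree_def by (meson rtranclp_trans tranclp_into_rtranclp)

lemma respD:
  assumes "resp step"
    "\<And>\<Gamma> \<Gamma>' X u. R\<^sup>+\<^sup>+ v u \<Longrightarrow> agree R u \<Gamma> \<Gamma>' \<Longrightarrow> Q \<Gamma> X u = Q' \<Gamma>' X u"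
    "agree R v \<Gamma> \<Gamma>'" "step R Q v \<Gamma> X"
  shows "step R Q' v \<Gamma>' X"
proof -
  have "(\<forall>\<Gamma> \<Gamma>' X u. R\<^sup>+\<^sup>+ v u \<longrightarrow> agree R u \<Gamma> \<Gamma>' \<longrightarrow> (Q \<Gamma> X u \<longleftrightarrow> Q' \<Gamma>' X u)) \<longrightarrow>
     agree R v \<Gamma> \<Gamma>' \<longrightarrow> step R Q v \<Gamma> X \<longrightarrow> step R Q' v \<Gamma>' X"
    using assms(1) unfolding resp_def by (elim allE)
  then show ?thesis using assms(2-4) by blast
qed

lemma strat_irrel:
  assumes "cwf R" "resp step"
  shows "agree R v \<Gamma> \<Gamma>' \<Longrightarrow> strat R step \<Gamma> X v \<longleftrightarrow> strat R step \<Gamma>' X v"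
proof (induction v arbitrary: \<Gamma> \<Gamma>' X rule: wf_induct[OF wf_later[OF assms(1)]])
  case (1 v)
  have H: "\<forall>\<Gamma> \<Gamma>' X u. R\<^sup>+\<^sup>+ v u \<longrightarrow> agree R u \<Gamma> \<Gamma>' \<longrightarrow> (QQ R step v \<Gamma> X u \<longleftrightarrow> QQ R step v \<Gamma>' X u)"
    using 1(1) by (auto simp: later_def)
  have H': "\<forall>\<Gamma> \<Gamma>' X u. R\<^sup>+\<^sup>+ v u \<longrightarrow> agree R u \<Gamma>' \<Gamma> \<longrightarrow> (QQ R step v \<Gamma>' X u \<longleftrightarrow> QQ R step v \<Gamma> X u)"
    using H agree_sym by metis
  show ?case
    unfolding strat_unfold[OF assms(1)]
  proof
    assume "step R (QQ R step v) v \<Gamma> X"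
    then show "step R (QQ R step v) v \<Gamma>' X"
      using respD[OF assms(2) _ 1(2)] H by blast
  next
    assume "step R (QQ R step v) v \<Gamma>' X"
    then show "step R (QQ R step v) v \<Gamma> X"
      using respD[OF assms(2) _ agree_sym[OF 1(2)]] H' by blast
  qed
qed

lemma resp_cpl_aux:
  fixes R :: "'w \<Rightarrow> 'w \<Rightarrow> bool" and Q Q' :: "('a,'w) ctx \<Rightarrow> 'a fm \<Rightarrow> 'w \<Rightarrow> bool"
  assumes H: "\<forall>\<Gamma> \<Gamma>' X u. R\<^sup>+\<^sup>+ v u \<longrightarrow> agree R u \<Gamma> \<Gamma>' \<longrightarrow> (Q \<Gamma> X u \<longleftrightarrow> Q' \<Gamma>' X u)"
  shows "cpl_at R Q v \<Gamma> X \<Longrightarrow> agree R v \<Gamma> \<Gamma>' \<Longrightarrow> cpl_at R Q' v \<Gamma>' X"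
proof (induction arbitrary: \<Gamma>' rule: cpl_at.induct)
  have S: "Q \<Gamma> A w' \<longleftrightarrow> Q' \<Gamma>' A w'" if "R v w'" "agree R v \<Gamma> \<Gamma>'" for \<Gamma> \<Gamma>' A w'
    using H agree_succ[OF that(2,1)] that(1) by (meson tranclp.r_into_trancl)
  {
    case (hyp A \<Gamma>) then show ?case by (auto intro: cpl_at.hyp agree_hyp)
  next
    case (botE \<Gamma> C) then show ?case by (auto intro: cpl_at.botE)
  next
    case (impI A \<Gamma> B) then show ?case by (auto intro: cpl_at.impI agree_cons)
  next
    case (impE \<Gamma> A B) then show ?case by (auto intro: cpl_at.impE)
  next
    case (diaI w' \<Gamma> A) then show ?case using S by (auto intro: cpl_at.diaI)
  next
    case (boxI \<Gamma> A) then show ?case using S by (auto intro: cpl_at.boxI)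
  next
    case (diaE \<Gamma> A C)
    show ?case
    proof (rule cpl_at.diaE)
      show "cpl_at R Q' v \<Gamma>' (Dia A)" using diaE by blast
      show "\<forall>w'. R v w' \<longrightarrow> Q' \<Gamma>' A w' \<longrightarrow> cpl_at R Q' v \<Gamma>' C"
        using diaE S by blast
    qed
  next
    case (boxE \<Gamma> A C)
    show ?case
    proof (rule cpl_at.boxE)
      show "cpl_at R Q' v \<Gamma>' (Box A)" using boxE by blast
      show "(\<forall>w'. R v w' \<longrightarrow> Q' \<Gamma>' A w') \<longrightarrow> cpl_at R Q' v \<Gamma>' C"
        using boxE S by blast
    qed
  }
qed

lemma resp_cpl: "resp cpl_at"
  unfolding resp_def
  apply (rule allI)+
  apply (rule HOL.impI)+
  apply (erule resp_cpl_aux)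
   apply assumption+
  done

lemma resp_cpls_aux:
  fixes R :: "'w \<Rightarrow> 'w \<Rightarrow> bool" and Q Q' :: "('a,'w) ctx \<Rightarrow> 'a fm \<Rightarrow> 'w \<Rightarrow> bool"
  assumes H: "\<forall>\<Gamma> \<Gamma>' X u. R\<^sup>+\<^sup>+ v u \<longrightarrow> agree R u \<Gamma> \<Gamma>' \<longrightarrow> (Q \<Gamma> X u \<longleftrightarrow> Q' \<Gamma>' X u)"
  shows "cpls_at R Q v \<Gamma> X \<Longrightarrow> agree R v \<Gamma> \<Gamma>' \<Longrightarrow> cpls_at R Q' v \<Gamma>' X"
proof (induction arbitrary: \<Gamma>' rule: cpls_at.induct)
  have S: "Q \<Gamma> A w' \<longleftrightarrow> Q' \<Gamma>' A w'" if "R v w'" "agree R v \<Gamma> \<Gamma>'" for \<Gamma> \<Gamma>' A w'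
    using H agree_succ[OF that(2,1)] that(1) by (meson tranclp.r_into_trancl)
  have S2: "Q \<Gamma> A w' \<longleftrightarrow> Q' \<Gamma>' A w'" if "R\<^sup>+\<^sup>+ v w'" "agree R v \<Gamma> \<Gamma>'" for \<Gamma> \<Gamma>' A w'
    using H agree_far[OF that(2,1)] that(1) by meson
  have S3: "Q \<Gamma> A w' \<longleftrightarrow> Q' \<Gamma>' A w'" if "R\<^sup>+\<^sup>+ v u" "R u w'" "agree R v \<Gamma> \<Gamma>'" for \<Gamma> \<Gamma>' A w' u
    using S2 that by (meson tranclp.trancl_into_trancl)
  {
    case (hyp A \<Gamma>) then show ?case by (auto intro: cpls_at.hyp agree_hyp)
  next
    case (botE_here \<Gamma> C) then show ?case by (auto intro: cpls_at.botE_here)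
  next
    case (botE_far u \<Gamma> C) then show ?case using S2 by (auto intro: cpls_at.botE_far)
  next
    case (impI A \<Gamma> B) then show ?case by (auto intro: cpls_at.impI agree_cons)
  next
    case (impE \<Gamma> A B) then show ?case by (auto intro: cpls_at.impE)
  next
    case (diaI w' \<Gamma> A) then show ?case using S by (auto intro: cpls_at.diaI)
  next
    case (boxI \<Gamma> A) then show ?case using S by (auto intro: cpls_at.boxI)
  next
    case (diaE_here \<Gamma> A C)
    show ?case
    proof (rule cpls_at.diaE_here)
      show "cpls_at R Q' v \<Gamma>' (Dia A)" using diaE_here by blast
      show "\<forall>w'. R v w' \<longrightarrow> Q' \<Gamma>' A w' \<longrightarrow> cpls_at R Q' v \<Gamma>' C"
        using diaE_here S by blast
    qed
  next
    case (diaE_far u \<Gamma> A C)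
    show ?case
    proof (rule cpls_at.diaE_far)
      show "R\<^sup>+\<^sup>+ v u" by fact
      show "Q' \<Gamma>' (Dia A) u" using diaE_far S2 by blast
      show "\<forall>w'. R u w' \<longrightarrow> Q' \<Gamma>' A w' \<longrightarrow> cpls_at R Q' v \<Gamma>' C"
        using diaE_far S3 by blast
    qed
  next
    case (boxE_here \<Gamma> A C)
    show ?case
    proof (rule cpls_at.boxE_here)
      show "cpls_at R Q' v \<Gamma>' (Box A)" using boxE_here by blast
      show "(\<forall>w'. R v w' \<longrightarrow> Q' \<Gamma>' A w') \<longrightarrow> cpls_at R Q' v \<Gamma>' C"
        using boxE_here S by blast
    qed
  next
    case (boxE_far u \<Gamma> A C)
    show ?case
    proof (rule cpls_at.boxE_far)
      show "R\<^sup>+\<^sup>+ v u" by fact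
      show "Q' \<Gamma>' (Box A) u" using boxE_far S2 by blast
      show "(\<forall>w'. R u w' \<longrightarrow> Q' \<Gamma>' A w') \<longrightarrow> cpls_at R Q' v \<Gamma>' C"
        using boxE_far S3 by blast
    qed
  }
qed

lemma resp_cpls: "resp cpls_at"
  unfolding resp_def
  apply (rule allI)+
  apply (rule HOL.impI)+
  apply (erule resp_cpls_aux)
   apply assumption+
  done

lemma resp_seq_aux:
  fixes R :: "'w \<Rightarrow> 'w \<Rightarrow> bool" and Q Q' :: "('a,'w) ctx \<Rightarrow> 'a fm \<Rightarrow> 'w \<Rightarrow> bool"
  assumes H: "\<forall>\<Gamma> \<Gamma>' X u. R\<^sup>+\<^sup>+ v u \<longrightarrow> agree R u \<Gamma> \<Gamma>' \<longrightarrow> (Q \<Gamma> X u \<longleftrightarrow> Q' \<Gamma>' X u)"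
  shows "seq_at R Q v \<Gamma> X \<Longrightarrow> agree R v \<Gamma> \<Gamma>' \<Longrightarrow> seq_at R Q' v \<Gamma>' X"
proof (induction arbitrary: \<Gamma>' rule: seq_at.induct)
  have S: "Q \<Gamma> A w' \<longleftrightarrow> Q' \<Gamma>' A w'" if "R v w'" "agree R v \<Gamma> \<Gamma>'" for \<Gamma> \<Gamma>' A w'
    using H agree_succ[OF that(2,1)] that(1) by (meson tranclp.r_into_trancl)
  {
    case (init q \<Gamma>) then show ?case by (auto intro: seq_at.init agree_hyp)
  next
    case (botL \<Gamma> C) then show ?case by (auto intro: seq_at.botL agree_hyp)
  next
    case (impR A \<Gamma> B) then show ?case by (auto intro: seq_at.impR agree_cons)
  next
    case (impL A B \<Gamma> C) then show ?case by (auto intro: seq_at.impL agree_cons agree_hyp)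
  next
    case (diaR w' \<Gamma> A) then show ?case using S by (auto intro: seq_at.diaR)
  next
    case (boxR \<Gamma> A) then show ?case using S by (auto intro: seq_at.boxR)
  next
    case (diaL A \<Gamma> C)
    show ?case
    proof (rule seq_at.diaL)
      show "(Dia A, v) \<in> set \<Gamma>'" using diaL agree_hyp by metis
      show "\<forall>w'. R v w' \<longrightarrow> Q' \<Gamma>' A w' \<longrightarrow> seq_at R Q' v \<Gamma>' C"
        using diaL S by blast
    qed
  next
    case (boxL A \<Gamma> C)
    show ?case
    proof (rule seq_at.boxL)
      show "(Box A, v) \<in> set \<Gamma>'" using boxL agree_hyp by metis
      show "(\<forall>w'. R v w' \<longrightarrow> Q' \<Gamma>' A w') \<longrightarrow> seq_at R Q' v \<Gamma>' C"
        using boxL S by blast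
    qed
  }
qed

lemma resp_seq: "resp seq_at"
  unfolding resp_def
  apply (rule allI)+
  apply (rule HOL.impI)+
  apply (erule resp_seq_aux)
   apply assumption+
  done

lemma CPLs_un: "cwf R \<Longrightarrow> CPLs R \<Gamma> A w = cpls_at R (QQ R cpls_at w) w \<Gamma> A"
  unfolding CPLs_def by (rule strat_unfold)
lemma CPL_un: "cwf R \<Longrightarrow> CPL R \<Gamma> A w = cpl_at R (QQ R cpl_at w) w \<Gamma> A"
  unfolding CPL_def by (rule strat_unfold)
lemma Seq_un: "cwf R \<Longrightarrow> Seq R \<Gamma> A w = seq_at R (QQ R seq_at w) w \<Gamma> A"
  unfolding Seq_def by (rule strat_unfold)

lemma CPLs_mp:
  assumes "cwf R" "CPLs R \<Gamma> A v" "CPLs R \<Gamma> (Neg A) v"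
  shows "CPLs R \<Gamma> Bot v"
proof -
  have a: "cpls_at R (QQ R cpls_at v) v \<Gamma> A" "cpls_at R (QQ R cpls_at v) v \<Gamma> (Imp A Bot)"
    using assms(2,3) unfolding CPLs_un[OF assms(1)] Neg_def by auto
  show ?thesis unfolding CPLs_un[OF assms(1)] by (rule cpls_at.impE[OF a(2) a(1)])
qed

lemma part1a:
  assumes "cwf R"
  shows "CPLs R \<Gamma> (Imp (Dia (Neg A)) (Neg (Box A))) w"
proof -
  let ?Q = "QQ R cpls_at w"
  let ?G = "(Box A, w) # (Dia (Neg A), w) # \<Gamma>"
  have "cpls_at R ?Q w ?G Bot"
  proof (rule cpls_at.diaE_here[where A="Neg A"])
    show "cpls_at R ?Q w ?G (Dia (Neg A))" by (rule cpls_at.hyp) simp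
    show "\<forall>w'. R w w' \<longrightarrow> ?Q ?G (Neg A) w' \<longrightarrow> cpls_at R ?Q w ?G Bot"
    proof (intro allI HOL.impI)
      fix w' assume r: "R w w'" and n: "?Q ?G (Neg A) w'"
      show "cpls_at R ?Q w ?G Bot"
      proof (rule cpls_at.boxE_here[where A=A])
        show "cpls_at R ?Q w ?G (Box A)" by (rule cpls_at.hyp) simp
        show "(\<forall>w'. R w w' \<longrightarrow> ?Q ?G A w') \<longrightarrow> cpls_at R ?Q w ?G Bot"
        proof
          assume "\<forall>w'. R w w' \<longrightarrow> ?Q ?G A w'"
          then have "CPLs R ?G A w'" "CPLs R ?G (Neg A) w'" using r n by (simp_all add: CPLs_def)
          then have "CPLs R ?G Bot w'" by (rule CPLs_mp[OF assms])
          then have "?Q ?G Bot w'" using r by (simp add: CPLs_def)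
          then show "cpls_at R ?Q w ?G Bot"
            using r by (intro cpls_at.botE_far[of R w w']) (simp_all add: tranclp.r_into_trancl)
        qed
      qed
    qed
  qed
  then show ?thesis
    unfolding CPLs_un[OF assms] Neg_def by (intro cpls_at.impI) (simp only: Neg_def)
qed

lemma part1b:
  assumes "cwf R"
  shows "CPLs R \<Gamma> (Imp (Box (Neg A)) (Neg (Dia A))) w"
proof -
  let ?Q = "QQ R cpls_at w"
  let ?G = "(Dia A, w) # (Box (Neg A), w) # \<Gamma>"
  have "cpls_at R ?Q w ?G Bot"
  proof (rule cpls_at.diaE_here[where A="A"])
    show "cpls_at R ?Q w ?G (Dia A)" by (rule cpls_at.hyp) simp
    show "\<forall>w'. R w w' \<longrightarrow> ?Q ?G A w' \<longrightarrow> cpls_at R ?Q w ?G Bot"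
    proof (intro allI HOL.impI)
      fix w' assume r: "R w w'" and n: "?Q ?G A w'"
      show "cpls_at R ?Q w ?G Bot"
      proof (rule cpls_at.boxE_here[where A="Neg A"])
        show "cpls_at R ?Q w ?G (Box (Neg A))" by (rule cpls_at.hyp) simp
        show "(\<forall>w'. R w w' \<longrightarrow> ?Q ?G (Neg A) w') \<longrightarrow> cpls_at R ?Q w ?G Bot"
        proof
          assume "\<forall>w'. R w w' \<longrightarrow> ?Q ?G (Neg A) w'"
          then have "CPLs R ?G A w'" "CPLs R ?G (Neg A) w'" using r n by (simp_all add: CPLs_def)
          then have "CPLs R ?G Bot w'" by (rule CPLs_mp[OF assms])
          then have "?Q ?G Bot w'" using r by (simp add: CPLs_def)
          then show "cpls_at R ?Q w ?G Bot"
            using r by (intro cpls_at.botE_far[of R w w']) (simp_all add: tranclp.r_into_trancl)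
        qed
      qed
    qed
  qed
  then show ?thesis
    unfolding CPLs_un[OF assms] Neg_def by (intro cpls_at.impI) (simp only: Neg_def)
qed

definition R01 :: "nat \<Rightarrow> nat \<Rightarrow> bool" where "R01 x y \<longleftrightarrow> x = 0 \<and> y = 1"

lemma cwf_R01: "cwf R01"
  unfolding cwf_def
proof
  assume "\<exists>f :: nat \<Rightarrow> nat. \<forall>i. R01 (f i) (f (Suc i))"
  then obtain f :: "nat \<Rightarrow> nat" where f: "\<forall>i. R01 (f i) (f (Suc i))" by blast
  have "R01 (f 0) (f 1)" "R01 (f 1) (f 2)" using f[rule_format, of 0] f[rule_format, of 1] by (simp_all add: numeral_2_eq_2)
  then show False by (simp add: R01_def)
qed

lemma R01_trancl: "R01\<^sup>+\<^sup>+ x y \<Longrightarrow> x = 0 \<and> y = 1"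
proof (induction rule: tranclp.induct)
  case (r_into_trancl a b) then show ?case by (simp add: R01_def)
next
  case (trancl_into_trancl a b c) then show ?case by (simp add: R01_def)
qed
lemma R01_rtrancl1_aux: "R01\<^sup>*\<^sup>* x u \<Longrightarrow> x = 1 \<Longrightarrow> u = 1"
  by (induction rule: rtranclp.induct) (auto simp: R01_def)
lemma R01_rtrancl1: "R01\<^sup>*\<^sup>* 1 u \<Longrightarrow> u = 1"
  using R01_rtrancl1_aux by blast

lemma R01_1[simp]: "\<not> R01 (Suc 0) w" by (simp add: R01_def)
lemma R01_1'[simp]: "\<not> R01 1 w" by (simp add: R01_def)
lemma R01_tr1[simp]: "\<not> R01\<^sup>+\<^sup>+ (Suc 0) w"
proof
  assume "R01\<^sup>+\<^sup>+ (Suc 0) w" from R01_trancl[OF this] show False by simp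
qed
lemma R01_tr1'[simp]: "\<not> R01\<^sup>+\<^sup>+ 1 w" using R01_tr1 by simp
lemma R01_0[simp]: "R01 0 w \<longleftrightarrow> w = 1" by (auto simp: R01_def)
lemma R01_tr0[simp]: "R01\<^sup>+\<^sup>+ 0 w \<longleftrightarrow> w = 1"
proof
  assume "R01\<^sup>+\<^sup>+ 0 w" then show "w = 1" using R01_trancl by blast
next
  assume "w = 1" then show "R01\<^sup>+\<^sup>+ 0 w" using tranclp.r_into_trancl[of R01 0 1] by (simp add: R01_def)
qed

lemma agree_cons0: "agree R01 1 \<Gamma> \<Gamma>0 \<Longrightarrow> agree R01 1 ((A,0)#\<Gamma>) \<Gamma>0"
  unfolding agree_def using R01_rtrancl1 by fastforce

fun tr1 :: "('a \<Rightarrow> bool) \<Rightarrow> 'a fm \<Rightarrow> bool" where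
  "tr1 V (Atom q) = V q"
| "tr1 V Bot = False"
| "tr1 V (Imp A B) = (tr1 V A \<longrightarrow> tr1 V B)"
| "tr1 V (Dia A) = False"
| "tr1 V (Box A) = True"

fun tr0 :: "('a fm \<Rightarrow> bool) \<Rightarrow> 'a fm \<Rightarrow> bool" where
  "tr0 D (Atom q) = False"
| "tr0 D Bot = False"
| "tr0 D (Imp A B) = (tr0 D A \<longrightarrow> tr0 D B)"
| "tr0 D (Dia A) = D A"
| "tr0 D (Box A) = D A"

lemma sound1_cpl:
  "cpl_at R01 Q 1 \<Gamma> X \<Longrightarrow> (\<forall>Y. (Y,1) \<in> set \<Gamma> \<longrightarrow> tr1 V Y) \<Longrightarrow> tr1 V X"
proof (induction rule: cpl_at.induct)
  case (boxE \<Gamma> A C) then show ?case by simp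
qed auto

lemma sound1_cpls:
  "cpls_at R01 Q 1 \<Gamma> X \<Longrightarrow> (\<forall>Y. (Y,1) \<in> set \<Gamma> \<longrightarrow> tr1 V Y) \<Longrightarrow> tr1 V X"
proof (induction rule: cpls_at.induct)
  case (boxE_here \<Gamma> A C) then show ?case by simp
qed auto

lemma QQ0_cpl: "agree R01 (Suc 0) \<Gamma> \<Gamma>0 \<Longrightarrow> strat R01 cpl_at \<Gamma> X (Suc 0) = CPL R01 \<Gamma>0 X (Suc 0)"
  using strat_irrel[OF cwf_R01 resp_cpl] by (simp add: CPL_def)

lemma QQ0_cpls: "agree R01 (Suc 0) \<Gamma> \<Gamma>0 \<Longrightarrow> strat R01 cpls_at \<Gamma> X (Suc 0) = CPLs R01 \<Gamma>0 X (Suc 0)"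
  using strat_irrel[OF cwf_R01 resp_cpls] by (simp add: CPLs_def)

lemma sound0_cpl:
  "cpl_at R01 (QQ R01 cpl_at 0) 0 \<Gamma> X \<Longrightarrow> agree R01 1 \<Gamma> \<Gamma>0 \<Longrightarrow>
   (\<forall>Y. (Y,0) \<in> set \<Gamma> \<longrightarrow> tr0 (\<lambda>X. CPL R01 \<Gamma>0 X 1) Y) \<Longrightarrow> tr0 (\<lambda>X. CPL R01 \<Gamma>0 X 1) X"
proof (induction rule: cpl_at.induct)
  case (impI A \<Gamma> B)
  have ag: "agree R01 1 ((A,0)#\<Gamma>) \<Gamma>0" using impI.prems(1) agree_cons0 by blast
  have "\<forall>Y. (Y,0) \<in> set ((A,0)#\<Gamma>) \<longrightarrow> tr0 (\<lambda>X. CPL R01 \<Gamma>0 X 1) Y"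
    if "tr0 (\<lambda>X. CPL R01 \<Gamma>0 X 1) A" using impI.prems(2) that by auto
  then show ?case using impI.IH ag by simp
next
  case (diaI w' \<Gamma> A) then show ?case using QQ0_cpl[OF diaI.prems(1)[simplified]] by simp
next
  case (boxI \<Gamma> A) then show ?case using QQ0_cpl[OF boxI.prems(1)[simplified]] by simp
next
  case (diaE \<Gamma> A C) then show ?case using QQ0_cpl[OF diaE.prems(1)[simplified]] by simp
next
  case (boxE \<Gamma> A C) then show ?case using QQ0_cpl[OF boxE.prems(1)[simplified]] by simp
qed auto

lemma sound0_cpls:
  assumes nb: "\<not> CPLs R01 \<Gamma>0 Bot 1" and nd: "\<forall>Z. \<not> CPLs R01 \<Gamma>0 (Dia Z) 1"
  shows "cpls_at R01 (QQ R01 cpls_at 0) 0 \<Gamma> X \<Longrightarrow> agree R01 1 \<Gamma> \<Gamma>0 \<Longrightarrow>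
   (\<forall>Y. (Y,0) \<in> set \<Gamma> \<longrightarrow> tr0 (\<lambda>X. CPLs R01 \<Gamma>0 X 1) Y) \<Longrightarrow> tr0 (\<lambda>X. CPLs R01 \<Gamma>0 X 1) X"
proof (induction rule: cpls_at.induct)
  case (impI A \<Gamma> B)
  have ag: "agree R01 1 ((A,0)#\<Gamma>) \<Gamma>0" using impI.prems(1) agree_cons0 by blast
  have "\<forall>Y. (Y,0) \<in> set ((A,0)#\<Gamma>) \<longrightarrow> tr0 (\<lambda>X. CPLs R01 \<Gamma>0 X 1) Y"
    if "tr0 (\<lambda>X. CPLs R01 \<Gamma>0 X 1) A" using impI.prems(2) that by auto
  then show ?case using impI.IH ag by simp
next
  case (diaI w' \<Gamma> A) then show ?case using QQ0_cpls[OF diaI.prems(1)[simplified]] by simp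
next
  case (boxI \<Gamma> A) then show ?case using QQ0_cpls[OF boxI.prems(1)[simplified]] by simp
next
  case (diaE_here \<Gamma> A C) then show ?case using QQ0_cpls[OF diaE_here.prems(1)[simplified]] by simp
next
  case (boxE_here \<Gamma> A C) then show ?case using QQ0_cpls[OF boxE_here.prems(1)[simplified]] by simp
next
  case (botE_far v \<Gamma> C) then show ?case using QQ0_cpls[OF botE_far.prems(1)[simplified]] nb by simp
next
  case (diaE_far v \<Gamma> A C) then show ?case using QQ0_cpls[OF diaE_far.prems(1)[simplified]] nd by simp
next
  case (boxE_far v \<Gamma> A C) then show ?case using R01_trancl by simp
qed auto

lemma agree_refl: "agree R v \<Gamma> \<Gamma>" by (simp add: agree_def)

lemma all1: "CPL R01 [(Bot, (Suc 0))] X (Suc 0)"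
  unfolding CPL_un[OF cwf_R01] by (rule cpl_at.botE, rule cpl_at.hyp) simp

lemma no1_cpl: "\<not> CPL R01 [] X (Suc 0)" if "\<not> tr1 V X" for V X
proof
  assume "CPL R01 [] X (Suc 0)"
  then have "cpl_at R01 (QQ R01 cpl_at (Suc 0)) (Suc 0) [] X" by (simp add: CPL_un[OF cwf_R01])
  from sound1_cpl[unfolded One_nat_def, OF this[simplified]] that show False by simp
qed

lemma no1_cpls: "\<not> CPLs R01 [] X (Suc 0)" if "\<not> tr1 V X" for V X
proof
  assume "CPLs R01 [] X (Suc 0)"
  then have "cpls_at R01 (QQ R01 cpls_at (Suc 0)) (Suc 0) [] X" by (simp add: CPLs_un[OF cwf_R01])
  from sound1_cpls[unfolded One_nat_def, OF this[simplified]] that show False by simp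
qed

lemma ii_a: "\<not> CPL R01 [(Bot, (Suc 0))] (Imp (Dia (Neg A)) (Neg (Box A))) 0"
proof
  assume "CPL R01 [(Bot, (Suc 0))] (Imp (Dia (Neg A)) (Neg (Box A))) 0"
  then have "cpl_at R01 (QQ R01 cpl_at 0) 0 [(Bot, (Suc 0))] (Imp (Dia (Neg A)) (Neg (Box A)))"
    by (simp add: CPL_un[OF cwf_R01])
  from sound0_cpl[unfolded One_nat_def, OF this agree_refl] show False by (simp add: all1 Neg_def)
qed

lemma ii_b: "\<not> CPL R01 [(Bot, (Suc 0))] (Imp (Box (Neg A)) (Neg (Dia A))) 0"
proof
  assume "CPL R01 [(Bot, (Suc 0))] (Imp (Box (Neg A)) (Neg (Dia A))) 0"
  then have "cpl_at R01 (QQ R01 cpl_at 0) 0 [(Bot, (Suc 0))] (Imp (Box (Neg A)) (Neg (Dia A)))"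
    by (simp add: CPL_un[OF cwf_R01])
  from sound0_cpl[unfolded One_nat_def, OF this agree_refl] show False by (simp add: all1 Neg_def)
qed

lemma n1: "\<not> CPL R01 [] (Atom a) (Suc 0)" "\<not> CPL R01 [] (Neg (Atom a)) (Suc 0)"
  by (rule no1_cpl[of "\<lambda>_. False"], simp) (rule no1_cpl[of "\<lambda>_. True"], simp add: Neg_def)
lemma n1s: "\<not> CPLs R01 [] (Atom a) (Suc 0)" "\<not> CPLs R01 [] (Neg (Atom a)) (Suc 0)"
    "\<not> CPLs R01 [] Bot (Suc 0)" "\<forall>Z. \<not> CPLs R01 [] (Dia Z) (Suc 0)"
  by (rule no1_cpls[of "\<lambda>_. False"], simp) (rule no1_cpls[of "\<lambda>_. True"], simp add: Neg_def,
      rule no1_cpls[of "\<lambda>_. True"], simp, intro allI, rule no1_cpls[of "\<lambda>_. True"], simp)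

lemma iv_v_cpl:
  assumes "F = Imp (Neg (Dia (Atom a))) (Box (Neg (Atom a))) \<or> F = Imp (Neg (Box (Atom a))) (Dia (Neg (Atom a)))"
  shows "\<not> CPL R01 [] F 0"
proof
  assume "CPL R01 [] F 0"
  then have "cpl_at R01 (QQ R01 cpl_at 0) 0 [] F" by (simp add: CPL_un[OF cwf_R01])
  from sound0_cpl[unfolded One_nat_def, OF this agree_refl] assms n1[of a] show False by (auto simp: Neg_def)
qed

lemma iv_v_cpls:
  assumes "F = Imp (Neg (Dia (Atom a))) (Box (Neg (Atom a))) \<or> F = Imp (Neg (Box (Atom a))) (Dia (Neg (Atom a)))"
  shows "\<not> CPLs R01 [] F 0"
proof
  assume "CPLs R01 [] F 0"
  then have "cpls_at R01 (QQ R01 cpls_at 0) 0 [] F" by (simp add: CPLs_un[OF cwf_R01])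
  from sound0_cpls[unfolded One_nat_def, OF n1s(3,4) this agree_refl] assms n1s(1,2)[of a] show False by (auto simp: Neg_def)
qed

definition offv :: "'w \<Rightarrow> ('a,'w) ctx \<Rightarrow> ('a,'w) ctx \<Rightarrow> bool" where
  "offv v \<Gamma> \<Gamma>' \<longleftrightarrow> (\<forall>X u. u \<noteq> v \<longrightarrow> ((X,u) \<in> set \<Gamma> \<longleftrightarrow> (X,u) \<in> set \<Gamma>'))"

definition Qinv :: "('w \<Rightarrow> 'w \<Rightarrow> bool) \<Rightarrow> (('a,'w) ctx \<Rightarrow> 'a fm \<Rightarrow> 'w \<Rightarrow> bool) \<Rightarrow> 'w \<Rightarrow> bool" where
  "Qinv R Q v \<longleftrightarrow> (\<forall>\<Gamma> \<Gamma>' Y u. R v u \<longrightarrow> offv v \<Gamma> \<Gamma>' \<longrightarrow> Q \<Gamma> Y u = Q \<Gamma>' Y u)"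

lemma QinvD: "Qinv R Q v \<Longrightarrow> R v u \<Longrightarrow> offv v \<Gamma> \<Gamma>' \<Longrightarrow> Q \<Gamma> Y u = Q \<Gamma>' Y u"
  unfolding Qinv_def by blast

lemma offv_cons: "offv v ((A,v)#\<Gamma>) \<Gamma>" "offv v \<Gamma> ((A,v)#\<Gamma>)"
  unfolding offv_def by auto

lemma offv_cons2: "offv v \<Gamma> \<Gamma>' \<Longrightarrow> offv v ((A,v)#\<Gamma>) ((A,v)#\<Gamma>')"
  unfolding offv_def by auto

lemma seq_weak:
  assumes Qi: "Qinv R Q v"
  shows "seq_at R Q v \<Gamma> C \<Longrightarrow> set \<Gamma> \<subseteq> set \<Gamma>' \<Longrightarrow> offv v \<Gamma> \<Gamma>' \<Longrightarrow> seq_at R Q v \<Gamma>' C"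
proof (induction arbitrary: \<Gamma>' rule: seq_at.induct)
  case (init q \<Gamma>) then show ?case by (auto intro: seq_at.init)
next
  case (botL \<Gamma> C) then show ?case by (auto intro: seq_at.botL)
next
  case (impR A \<Gamma> B)
  have "seq_at R Q v ((A,v)#\<Gamma>') B" using impR.IH[of "(A,v)#\<Gamma>'"] impR.prems offv_cons2[OF impR.prems(2)] by auto
  then show ?case by (rule seq_at.impR)
next
  case (impL A B \<Gamma> C)
  have "seq_at R Q v ((B,v)#\<Gamma>') C" using impL.IH(2)[of "(B,v)#\<Gamma>'"] impL.prems offv_cons2[OF impL.prems(2)] by auto
  moreover have "seq_at R Q v \<Gamma>' A" using impL by blast
  ultimately show ?case using impL(1,6) by (auto intro: seq_at.impL)
next
  case (diaR w' \<Gamma> A)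
  then have "Q \<Gamma>' A w'" using QinvD[OF Qi] by metis
  then show ?case by (rule seq_at.diaR[of R v w' Q \<Gamma>' A, OF diaR(1)])
next
  case (boxR \<Gamma> A)
  then have "\<forall>w'. R v w' \<longrightarrow> Q \<Gamma>' A w'" using QinvD[OF Qi] by metis
  then show ?case by (rule seq_at.boxR)
next
  case (diaL A \<Gamma> C)
  show ?case
  proof (rule seq_at.diaL)
    show "(Dia A, v) \<in> set \<Gamma>'" using diaL by blast
    show "\<forall>w'. R v w' \<longrightarrow> Q \<Gamma>' A w' \<longrightarrow> seq_at R Q v \<Gamma>' C"
      using diaL QinvD[OF Qi] by metis
  qed
next
  case (boxL A \<Gamma> C)
  show ?case
  proof (rule seq_at.boxL)
    show "(Box A, v) \<in> set \<Gamma>'" using boxL by blast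
    show "(\<forall>w'. R v w' \<longrightarrow> Q \<Gamma>' A w') \<longrightarrow> seq_at R Q v \<Gamma>' C"
      using boxL QinvD[OF Qi] by metis
  qed
qed

lemma seq_weak1: "Qinv R Q v \<Longrightarrow> seq_at R Q v \<Gamma> C \<Longrightarrow> seq_at R Q v ((A,v)#\<Gamma>) C"
  by (erule seq_weak) (auto simp: offv_cons)

lemma seq_bot:
  assumes "seq_at R Q v \<Gamma> X"
  shows "X = Bot \<Longrightarrow> seq_at R Q v \<Gamma> C"
  using assms
proof (induction rule: seq_at.induct)
  case (botL \<Gamma> C') show ?case apply (rule seq_at.botL) using botL(1) apply assumption done
next
  case (impL A B \<Gamma> C')
  show ?case by (rule seq_at.impL[OF impL(1,2)]) (use impL in blast)
next
  case (diaL A \<Gamma> C')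
  show ?case by (rule seq_at.diaL[OF diaL(1)]) (use diaL in blast)
next
  case (boxL A \<Gamma> C')
  show ?case by (rule seq_at.boxL[OF boxL(1)]) (use boxL in blast)
qed auto

lemma seq_dia_inv:
  assumes Qi: "Qinv R Q v"
  shows "seq_at R Q v \<Gamma> X \<Longrightarrow> X = Dia A \<Longrightarrow> (\<exists>w'. R v w' \<and> Q \<Gamma> A w') \<or> (\<forall>C. seq_at R Q v \<Gamma> C)"
proof (induction rule: seq_at.induct)
  case (botL \<Gamma> C') then show ?case using seq_at.botL by metis
next
  case (impL A0 B \<Gamma> C')
  from impL.IH(2)[OF impL.prems] show ?case
  proof
    assume "\<exists>w'. R v w' \<and> Q ((B, v) # \<Gamma>) A w'"
    then show ?case using QinvD[OF Qi _ offv_cons(1)] by metis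
  next
    assume a: "\<forall>C. seq_at R Q v ((B, v) # \<Gamma>) C"
    have "seq_at R Q v \<Gamma> C" for C by (rule seq_at.impL[OF impL(1,2)]) (use a in blast)
    then show ?case by blast
  qed
next
  case (diaR w' \<Gamma> A0) then show ?case by blast
next
  case (diaL A0 \<Gamma> C')
  show ?case
  proof (cases "\<exists>w'. R v w' \<and> Q \<Gamma> A0 w'")
    case True then show ?thesis using diaL by blast
  next
    case False
    have "seq_at R Q v \<Gamma> C" for C by (rule seq_at.diaL[OF diaL(1)]) (use False in blast)
    then show ?thesis by blast
  qed
next
  case (boxL A0 \<Gamma> C')
  show ?case
  proof (cases "\<forall>w'. R v w' \<longrightarrow> Q \<Gamma> A0 w'")
    case True then show ?thesis using boxL by blast
  next
    case False
    have "seq_at R Q v \<Gamma> C" for C by (rule seq_at.boxL[OF boxL(1)]) (use False in blast)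
    then show ?thesis by blast
  qed
qed auto

lemma seq_box_inv:
  assumes Qi: "Qinv R Q v"
  shows "seq_at R Q v \<Gamma> X \<Longrightarrow> X = Box A \<Longrightarrow> (\<forall>w'. R v w' \<longrightarrow> Q \<Gamma> A w') \<or> (\<forall>C. seq_at R Q v \<Gamma> C)"
proof (induction rule: seq_at.induct)
  case (botL \<Gamma> C') then show ?case using seq_at.botL by metis
next
  case (impL A0 B \<Gamma> C')
  from impL.IH(2)[OF impL.prems] show ?case
  proof
    assume "\<forall>w'. R v w' \<longrightarrow> Q ((B, v) # \<Gamma>) A w'"
    then show ?case using QinvD[OF Qi _ offv_cons(1)] by metis
  next
    assume a: "\<forall>C. seq_at R Q v ((B, v) # \<Gamma>) C"
    have "seq_at R Q v \<Gamma> C" for C by (rule seq_at.impL[OF impL(1,2)]) (use a in blast)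
    then show ?case by blast
  qed
next
  case (boxR \<Gamma> A0) then show ?case by blast
next
  case (diaL A0 \<Gamma> C')
  show ?case
  proof (cases "\<exists>w'. R v w' \<and> Q \<Gamma> A0 w'")
    case True then show ?thesis using diaL by blast
  next
    case False
    have "seq_at R Q v \<Gamma> C" for C by (rule seq_at.diaL[OF diaL(1)]) (use False in blast)
    then show ?thesis by blast
  qed
next
  case (boxL A0 \<Gamma> C')
  show ?case
  proof (cases "\<forall>w'. R v w' \<longrightarrow> Q \<Gamma> A0 w'")
    case True then show ?thesis using boxL by blast
  next
    case False
    have "seq_at R Q v \<Gamma> C" for C by (rule seq_at.boxL[OF boxL(1)]) (use False in blast)
    then show ?thesis by blast
  qed
qed auto

lemma seq_imp_inv:
  assumes Qi: "Qinv R Q v"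
  shows "seq_at R Q v \<Gamma> X \<Longrightarrow> X = Imp A B \<Longrightarrow> seq_at R Q v ((A,v)#\<Gamma>) B"
proof (induction rule: seq_at.induct)
  case (botL \<Gamma> C') then show ?case by (intro seq_at.botL) simp
next
  case (impR A0 \<Gamma> B0) then show ?case by simp
next
  case (impL A0 B0 \<Gamma> C')
  have h: "seq_at R Q v ((A,v)#(B0,v)#\<Gamma>) B" using impL.IH(2) impL.prems by blast
  show ?case
  proof (rule seq_at.impL[of A0 B0])
    show "(Imp A0 B0, v) \<in> set ((A, v) # \<Gamma>)" using impL(1) by simp
    show "seq_at R Q v ((A, v) # \<Gamma>) A0" using seq_weak1[OF Qi impL(2)] .
    show "seq_at R Q v ((B0, v) # (A, v) # \<Gamma>) B"
      by (rule seq_weak[OF Qi h]) (auto simp: offv_def)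
  qed
next
  case (diaL A0 \<Gamma> C')
  show ?case
  proof (rule seq_at.diaL[of A0])
    show "(Dia A0, v) \<in> set ((A, v) # \<Gamma>)" using diaL(1) by simp
    show "\<forall>w'. R v w' \<longrightarrow> Q ((A, v) # \<Gamma>) A0 w' \<longrightarrow> seq_at R Q v ((A, v) # \<Gamma>) B"
      using diaL QinvD[OF Qi _ offv_cons(1)] by metis
  qed
next
  case (boxL A0 \<Gamma> C')
  show ?case
  proof (rule seq_at.boxL[of A0])
    show "(Box A0, v) \<in> set ((A, v) # \<Gamma>)" using boxL(1) by simp
    show "(\<forall>w'. R v w' \<longrightarrow> Q ((A, v) # \<Gamma>) A0 w') \<longrightarrow> seq_at R Q v ((A, v) # \<Gamma>) B"
      using boxL QinvD[OF Qi _ offv_cons(1)] by metis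
  qed
qed auto

definition cutP :: "('w \<Rightarrow> 'w \<Rightarrow> bool) \<Rightarrow> (('a,'w) ctx \<Rightarrow> 'a fm \<Rightarrow> 'w \<Rightarrow> bool) \<Rightarrow> 'w \<Rightarrow> 'a fm \<Rightarrow> bool" where
  "cutP R Q v A \<longleftrightarrow> (\<forall>\<Gamma> \<Gamma>' C. seq_at R Q v \<Gamma>' C \<longrightarrow> set \<Gamma>' = insert (A,v) (set \<Gamma>) \<longrightarrow>
      seq_at R Q v \<Gamma> A \<longrightarrow> seq_at R Q v \<Gamma> C)"

lemma offv_ins: "set \<Gamma>' = insert (A,v) (set \<Gamma>) \<Longrightarrow> offv v \<Gamma>' \<Gamma>"
  unfolding offv_def by auto

lemma cut_step:
  assumes Qi: "Qinv R Q v"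
    and sub: "\<And>P B. A = Imp P B \<Longrightarrow> cutP R Q v P \<and> cutP R Q v B"
  shows "seq_at R Q v \<Gamma>' C \<Longrightarrow> set \<Gamma>' = insert (A,v) (set \<Gamma>) \<Longrightarrow> seq_at R Q v \<Gamma> A \<Longrightarrow> seq_at R Q v \<Gamma> C"
proof (induction arbitrary: \<Gamma> rule: seq_at.induct)
  case (init q \<Gamma>' \<Gamma>)
  show ?case
  proof (cases "(Atom q, v) \<in> set \<Gamma>")
    case True then show ?thesis by (rule seq_at.init)
  next
    case False then have "A = Atom q" using init by auto
    then show ?thesis using init by simp
  qed
next
  case (botL \<Gamma>' C \<Gamma>)
  show ?case
  proof (cases "(Bot, v) \<in> set \<Gamma>")
    case True then show ?thesis by (rule seq_at.botL)
  next
    case False then have "A = Bot" using botL by auto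
    then show ?thesis using botL seq_bot by metis
  qed
next
  case (impR A1 \<Gamma>' B \<Gamma>)
  have "seq_at R Q v ((A1,v)#\<Gamma>) B"
    using impR.IH[of "(A1,v)#\<Gamma>"] impR.prems seq_weak1[OF Qi impR.prems(2)] by auto
  then show ?case by (rule seq_at.impR)
next
  case (impL P B \<Gamma>' C \<Gamma>)
  have sP: "seq_at R Q v \<Gamma> P" using impL.IH(1) impL.prems by blast
  have sC: "seq_at R Q v ((B,v)#\<Gamma>) C"
    using impL.IH(2)[of "(B,v)#\<Gamma>"] impL.prems seq_weak1[OF Qi impL.prems(2)] by auto
  show ?case
  proof (cases "(Imp P B, v) \<in> set \<Gamma>")
    case True then show ?thesis using seq_at.impL sP sC by metis
  next
    case False then have eq: "A = Imp P B" using impL by auto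
    have inv: "seq_at R Q v ((P,v)#\<Gamma>) B" using seq_imp_inv[OF Qi impL.prems(2) eq] .
    have cP: "cutP R Q v P" and cB: "cutP R Q v B" using sub[OF eq] by auto
    have "seq_at R Q v \<Gamma> B" using cP inv sP unfolding cutP_def by auto
    then show ?thesis using cB sC unfolding cutP_def by auto
  qed
next
  case (diaR w' \<Gamma>' A0 \<Gamma>)
  have "Q \<Gamma> A0 w'" using diaR QinvD[OF Qi diaR(1) offv_ins[OF diaR.prems(1)]] by simp
  then show ?case by (rule seq_at.diaR[of R v w' Q \<Gamma> A0, OF diaR(1)])
next
  case (boxR \<Gamma>' A0 \<Gamma>)
  have "\<forall>w'. R v w' \<longrightarrow> Q \<Gamma> A0 w'" using boxR QinvD[OF Qi _ offv_ins[OF boxR.prems(1)]] by metis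
  then show ?case by (rule seq_at.boxR)
next
  case (diaL A0 \<Gamma>' C \<Gamma>)
  have QQ: "Q \<Gamma>' A0 w' = Q \<Gamma> A0 w'" if "R v w'" for w'
    using QinvD[OF Qi that offv_ins[OF diaL.prems(1)]] .
  have H: "seq_at R Q v \<Gamma> C" if "R v w'" "Q \<Gamma> A0 w'" for w'
    using diaL.IH diaL.prems QQ that by blast
  show ?case
  proof (cases "(Dia A0, v) \<in> set \<Gamma>")
    case True
    show ?thesis by (rule seq_at.diaL[OF True]) (use H in blast)
  next
    case False then have eq: "A = Dia A0" using diaL by auto
    from seq_dia_inv[OF Qi diaL.prems(2) eq] show ?thesis using H by blast
  qed
next
  case (boxL A0 \<Gamma>' C \<Gamma>)
  have QQ: "Q \<Gamma>' A0 w' = Q \<Gamma> A0 w'" if "R v w'" for w'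
    using QinvD[OF Qi that offv_ins[OF boxL.prems(1)]] .
  have H: "seq_at R Q v \<Gamma> C" if "\<forall>w'. R v w' \<longrightarrow> Q \<Gamma> A0 w'"
    using boxL.IH boxL.prems QQ that by blast
  show ?case
  proof (cases "(Box A0, v) \<in> set \<Gamma>")
    case True
    show ?thesis by (rule seq_at.boxL[OF True]) (use H in blast)
  next
    case False then have eq: "A = Box A0" using boxL by auto
    from seq_box_inv[OF Qi boxL.prems(2) eq] show ?thesis using H by blast
  qed
qed

lemma cut_step': "Qinv R Q v \<Longrightarrow> (\<And>P B. A = Imp P B \<Longrightarrow> cutP R Q v P \<and> cutP R Q v B) \<Longrightarrow> cutP R Q v A"
  unfolding cutP_def[of R Q v A]
  apply (rule allI)+
  apply (rule HOL.impI)+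
  apply (rule cut_step)
      apply assumption+
  done

lemma cut_all: "Qinv R Q v \<Longrightarrow> cutP R Q v A"
proof (induction A)
  case (Imp P B) then show ?case by (intro cut_step') auto
qed (rule cut_step', assumption, simp)+

lemma seq_mp:
  assumes Qi: "Qinv R Q v" and a: "seq_at R Q v \<Gamma> A" and b: "seq_at R Q v \<Gamma> (Imp A Bot)"
  shows "seq_at R Q v \<Gamma> Bot"
proof -
  have c: "seq_at R Q v ((A,v)#\<Gamma>) Bot" using seq_imp_inv[OF Qi b refl] .
  have "set ((A,v)#\<Gamma>) = insert (A,v) (set \<Gamma>)" by simp
  then show ?thesis using cut_all[OF Qi, of A] c a unfolding cutP_def by blast
qed

lemma no_back: "cwf R \<Longrightarrow> R w w' \<Longrightarrow> \<not> R\<^sup>*\<^sup>* w' w"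
  using cwf_irrefl[of R w] by (meson rtranclp_into_tranclp2)

lemma Qinv_Seq: assumes "cwf R" shows "Qinv R (QQ R seq_at v) v"
  unfolding Qinv_def
proof (intro allI HOL.impI)
  fix \<Gamma> \<Gamma>' Y u assume r: "R v u" and o: "offv v \<Gamma> \<Gamma>'"
  have "agree R u \<Gamma> \<Gamma>'"
    unfolding agree_def using o no_back[OF assms r] unfolding offv_def by metis
  then show "QQ R seq_at v \<Gamma> Y u = QQ R seq_at v \<Gamma>' Y u"
    using strat_irrel[OF assms resp_seq] r by simp
qed

lemma Seq_mp:
  assumes "cwf R" "Seq R \<Gamma> A v" "Seq R \<Gamma> (Neg A) v"
  shows "Seq R \<Gamma> Bot v"
  using seq_mp[OF Qinv_Seq[OF assms(1)]] assms(2,3) unfolding Seq_un[OF assms(1)] Neg_def by blast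

lemma agree_drop:
  assumes "cwf R" "R w w'"
  shows "agree R w' ((X,w)#(Y,w)#\<Gamma>) \<Gamma>"
  unfolding agree_def using no_back[OF assms] by auto

lemma part3a:
  assumes c: "cwf R" and nb: "\<not> (\<exists>w'. R w w' \<and> Seq R \<Gamma> Bot w')"
  shows "Seq R \<Gamma> (Imp (Dia (Neg A)) (Neg (Box A))) w"
proof -
  let ?Q = "QQ R seq_at w"
  let ?G = "(Box A, w) # (Dia (Neg A), w) # \<Gamma>"
  have "seq_at R ?Q w ?G Bot"
  proof (rule seq_at.diaL[where A="Neg A"])
    show "(Dia (Neg A), w) \<in> set ?G" by simp
    show "\<forall>w'. R w w' \<longrightarrow> ?Q ?G (Neg A) w' \<longrightarrow> seq_at R ?Q w ?G Bot"
    proof (intro allI HOL.impI)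
      fix w' assume r: "R w w'" and n: "?Q ?G (Neg A) w'"
      show "seq_at R ?Q w ?G Bot"
      proof (rule seq_at.boxL[where A=A])
        show "(Box A, w) \<in> set ?G" by simp
        show "(\<forall>w'. R w w' \<longrightarrow> ?Q ?G A w') \<longrightarrow> seq_at R ?Q w ?G Bot"
        proof
          assume "\<forall>w'. R w w' \<longrightarrow> ?Q ?G A w'"
          then have "Seq R ?G A w'" "Seq R ?G (Neg A) w'" using r n by (simp_all add: Seq_def)
          then have "Seq R ?G Bot w'" by (rule Seq_mp[OF c])
          then have "Seq R \<Gamma> Bot w'"
            using strat_irrel[OF c resp_seq agree_drop[OF c r]] unfolding Seq_def by blast
          then show "seq_at R ?Q w ?G Bot" using nb r by blast
        qed
      qed
    qed
  qed
  then show ?thesis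
    unfolding Seq_un[OF c] Neg_def by (intro seq_at.impR) (simp only: Neg_def)
qed

lemma part3b:
  assumes c: "cwf R" and nb: "\<not> (\<exists>w'. R w w' \<and> Seq R \<Gamma> Bot w')"
  shows "Seq R \<Gamma> (Imp (Box (Neg A)) (Neg (Dia A))) w"
proof -
  let ?Q = "QQ R seq_at w"
  let ?G = "(Dia A, w) # (Box (Neg A), w) # \<Gamma>"
  have "seq_at R ?Q w ?G Bot"
  proof (rule seq_at.diaL[where A="A"])
    show "(Dia A, w) \<in> set ?G" by simp
    show "\<forall>w'. R w w' \<longrightarrow> ?Q ?G A w' \<longrightarrow> seq_at R ?Q w ?G Bot"
    proof (intro allI HOL.impI)
      fix w' assume r: "R w w'" and n: "?Q ?G A w'"
      show "seq_at R ?Q w ?G Bot"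
      proof (rule seq_at.boxL[where A="Neg A"])
        show "(Box (Neg A), w) \<in> set ?G" by simp
        show "(\<forall>w'. R w w' \<longrightarrow> ?Q ?G (Neg A) w') \<longrightarrow> seq_at R ?Q w ?G Bot"
        proof
          assume "\<forall>w'. R w w' \<longrightarrow> ?Q ?G (Neg A) w'"
          then have "Seq R ?G A w'" "Seq R ?G (Neg A) w'" using r n by (simp_all add: Seq_def)
          then have "Seq R ?G Bot w'" by (rule Seq_mp[OF c])
          then have "Seq R \<Gamma> Bot w'"
            using strat_irrel[OF c resp_seq agree_drop[OF c r]] unfolding Seq_def by blast
          then show "seq_at R ?Q w ?G Bot" using nb r by blast
        qed
      qed
    qed
  qed
  then show ?thesis
    unfolding Seq_un[OF c] Neg_def by (intro seq_at.impR) (simp only: Neg_def)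
qed

theorem theorem8:
  shows
   "\<comment> \<open>(i)\<close>
    (\<forall>(R :: 'w \<Rightarrow> 'w \<Rightarrow> bool) (w :: 'w) (\<Gamma> :: ('a,'w) ctx) (A :: 'a fm). cwf R \<longrightarrow>
        CPLs R \<Gamma> (Imp (Dia (Neg A)) (Neg (Box A))) w \<and>
        CPLs R \<Gamma> (Imp (Box (Neg A)) (Neg (Dia A))) w)
  \<and> \<comment> \<open>(ii)\<close>
    (\<exists>(R :: nat \<Rightarrow> nat \<Rightarrow> bool) w (\<Gamma> :: ('a,nat) ctx) A. cwf R \<and>
        \<not> CPL R \<Gamma> (Imp (Dia (Neg A)) (Neg (Box A))) w)
  \<and> (\<exists>(R :: nat \<Rightarrow> nat \<Rightarrow> bool) w (\<Gamma> :: ('a,nat) ctx) A. cwf R \<and>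
        \<not> CPL R \<Gamma> (Imp (Box (Neg A)) (Neg (Dia A))) w)
  \<and> \<comment> \<open>(iii)\<close>
    (\<forall>(R :: 'w \<Rightarrow> 'w \<Rightarrow> bool) (\<Gamma> :: ('a,'w) ctx) (w :: 'w) (A :: 'a fm). cwf R \<longrightarrow>
        \<not> (\<exists>w'. R w w' \<and> Seq R \<Gamma> Bot w') \<longrightarrow>
        Seq R \<Gamma> (Imp (Dia (Neg A)) (Neg (Box A))) w \<and>
        Seq R \<Gamma> (Imp (Box (Neg A)) (Neg (Dia A))) w)
  \<and> \<comment> \<open>(iv)\<close>
    (\<exists>(R :: nat \<Rightarrow> nat \<Rightarrow> bool) w (\<Gamma> :: ('a,nat) ctx) A. cwf R \<and>
        \<not> CPL R \<Gamma> (Imp (Neg (Dia A)) (Box (Neg A))) w)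
  \<and> (\<exists>(R :: nat \<Rightarrow> nat \<Rightarrow> bool) w (\<Gamma> :: ('a,nat) ctx) A. cwf R \<and>
        \<not> CPLs R \<Gamma> (Imp (Neg (Dia A)) (Box (Neg A))) w)
  \<and> \<comment> \<open>(v)\<close>
    (\<exists>(R :: nat \<Rightarrow> nat \<Rightarrow> bool) w (\<Gamma> :: ('a,nat) ctx) A. cwf R \<and>
        \<not> CPL R \<Gamma> (Imp (Neg (Box A)) (Dia (Neg A))) w)
  \<and> (\<exists>(R :: nat \<Rightarrow> nat \<Rightarrow> bool) w (\<Gamma> :: ('a,nat) ctx) A. cwf R \<and>
        \<not> CPLs R \<Gamma> (Imp (Neg (Box A)) (Dia (Neg A))) w)"
proof (intro conjI)
  show "\<forall>(R :: 'w \<Rightarrow> 'w \<Rightarrow> bool) (w :: 'w) (\<Gamma> :: ('a,'w) ctx) (A :: 'a fm). cwf R \<longrightarrow>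
        CPLs R \<Gamma> (Imp (Dia (Neg A)) (Neg (Box A))) w \<and>
        CPLs R \<Gamma> (Imp (Box (Neg A)) (Neg (Dia A))) w"
    by (simp add: part1a part1b)
  show "\<exists>(R :: nat \<Rightarrow> nat \<Rightarrow> bool) w (\<Gamma> :: ('a,nat) ctx) A. cwf R \<and>
        \<not> CPL R \<Gamma> (Imp (Dia (Neg A)) (Neg (Box A))) w"
    using cwf_R01 ii_a by blast
  show "\<exists>(R :: nat \<Rightarrow> nat \<Rightarrow> bool) w (\<Gamma> :: ('a,nat) ctx) A. cwf R \<and>
        \<not> CPL R \<Gamma> (Imp (Box (Neg A)) (Neg (Dia A))) w"
    using cwf_R01 ii_b by blast
  show "\<forall>(R :: 'w \<Rightarrow> 'w \<Rightarrow> bool) (\<Gamma> :: ('a,'w) ctx) (w :: 'w) (A :: 'a fm). cwf R \<longrightarrow>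
        \<not> (\<exists>w'. R w w' \<and> Seq R \<Gamma> Bot w') \<longrightarrow>
        Seq R \<Gamma> (Imp (Dia (Neg A)) (Neg (Box A))) w \<and>
        Seq R \<Gamma> (Imp (Box (Neg A)) (Neg (Dia A))) w"
    by (simp add: part3a part3b)
  have c1: "\<not> CPL R01 ([] :: ('a,nat) ctx) (Imp (Neg (Dia (Atom a))) (Box (Neg (Atom a)))) 0"
     "\<not> CPL R01 ([] :: ('a,nat) ctx) (Imp (Neg (Box (Atom a))) (Dia (Neg (Atom a)))) 0"
     "\<not> CPLs R01 ([] :: ('a,nat) ctx) (Imp (Neg (Dia (Atom a))) (Box (Neg (Atom a)))) 0"
     "\<not> CPLs R01 ([] :: ('a,nat) ctx) (Imp (Neg (Box (Atom a))) (Dia (Neg (Atom a)))) 0" for a :: 'a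
    by (rule iv_v_cpl iv_v_cpls; simp)+
  show "\<exists>(R :: nat \<Rightarrow> nat \<Rightarrow> bool) w (\<Gamma> :: ('a,nat) ctx) A. cwf R \<and>
        \<not> CPL R \<Gamma> (Imp (Neg (Dia A)) (Box (Neg A))) w"
    using cwf_R01 c1(1) by blast
  show "\<exists>(R :: nat \<Rightarrow> nat \<Rightarrow> bool) w (\<Gamma> :: ('a,nat) ctx) A. cwf R \<and>
        \<not> CPLs R \<Gamma> (Imp (Neg (Dia A)) (Box (Neg A))) w"
    using cwf_R01 c1(3) by blast
  show "\<exists>(R :: nat \<Rightarrow> nat \<Rightarrow> bool) w (\<Gamma> :: ('a,nat) ctx) A. cwf R \<and>
        \<not> CPL R \<Gamma> (Imp (Neg (Box A)) (Dia (Neg A))) w"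
    using cwf_R01 c1(2) by blast
  show "\<exists>(R :: nat \<Rightarrow> nat \<Rightarrow> bool) w (\<Gamma> :: ('a,nat) ctx) A. cwf R \<and>
        \<not> CPLs R \<Gamma> (Imp (Neg (Box A)) (Dia (Neg A))) w"
    using cwf_R01 c1(4) by blast
qed

end
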